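(* Let $p\ge 2$. Let $\Phi_{\mu_0}$ be the list of functions consisting of $\phi_A$; the edge functions $\phi_{\mathcal{B},m}$ for $1\le m\le p-2$; the edge functions $\phi_{\mathcal{C},m}$ for $1\le m\le p-2$; and the interior functions $\phi_{\mathcal{I},m,n}$ for $m,n\ge 0$, $m+n\le p-4$. Let $\Phi_*$ be the list consisting of the edge functions $\phi_{\mathcal{A},m}$ for $1\le m\le p-1$ and the interior functions $\phi_{\mathcal{I},m,n}$ for $m,n\ge0$, $m+n\le p-3$. Then both lists have exactly $\tfrac12 p(p-1)$ elements, and the square matrix $G$ with entries $G_{ij}=\int_{\Omega_{ref}} \chi_i\,\eta_j\,d\Omega$, where $\chi_i$ runs over $\Phi_{\mu_0}$ and $\eta_j$ runs over $\Phi_*$, is non-singular. Consequently the only vector $x\in\mathbb{R}^{p(p-1)/2}$ with $Gx=0$ is $x=0$.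
   Context: $\Omega_{ref}=\{(r,s): -1\le r,\ -1\le s,\ r+s\le 0\}$. Warped coordinates: $\xi=-1+2\frac{1+r}{1-s}$, $\eta=s$. $P_n^{\alpha,\beta}$ denotes the classical Jacobi polynomial of degree $n$, orthogonal on $(-1,1)$ with weight $(1-z)^\alpha(1+z)^\beta$. The modified Dubiner functions are: vertex functions $\phi_A=\frac{1+\eta}{2}$, $\phi_B=\frac{1-\xi}{2}\frac{1-\eta}{2}$, $\phi_C=\frac{1+\xi}{2}\frac{1-\eta}{2}$; edge functions, for $1\le m\le p-1$, $\phi_{\mathcal{A},m}=\frac{1+\xi}{2}\frac{1-\xi}{2}P^{2,2}_{m-1}(\xi)\left(\frac{1-\eta}{2}\right)^{m+1}$, $\phi_{\mathcal{B},m}=\frac{1+\xi}{2}\frac{1-\eta}{2}\frac{1+\eta}{2}P^{2,2}_{m-1}(\eta)$, $\phi_{\mathcal{C},m}=(-1)^{m-1}\frac{1-\xi}{2}\frac{1-\eta}{2}\frac{1+\eta}{2}P^{2,2}_{m-1}(\eta)$; interior functions, for $m,n\ge 0$, $m+n\le p-3$, $\phi_{\mathcal{I},m,n}=\frac{1-\xi}{2}\frac{1+\xi}{2}P^{2,2}_m(\xi)\left(\frac{1-\eta}{2}\right)^{m+2}\frac{1+\eta}{2}P^{2m+5,2}_n(\eta)$. All of these are polynomials in $(r,s)$. *)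

theory Defs
  imports "HOL-Analysis.Analysis" "Jordan_Normal_Form.Determinant"
begin

definition jacobiP :: "nat \<Rightarrow> nat \<Rightarrow> nat \<Rightarrow> real \<Rightarrow> real" where
  "jacobiP n a b z = (\<Sum>k\<le>n. real ((n + a) choose (n - k)) * real ((n + b) choose k)
       * ((z - 1) / 2) ^ k * ((z + 1) / 2) ^ (n - k))"

definition Omega_ref :: "(real \<times> real) set" where
  "Omega_ref = {(r, s). -1 \<le> r \<and> -1 \<le> s \<and> r + s \<le> 0}"

definition xi :: "real \<Rightarrow> real \<Rightarrow> real" where
  "xi r s = -1 + 2 * (1 + r) / (1 - s)"

definition eta :: "real \<Rightarrow> real \<Rightarrow> real" where
  "eta r s = s"

definition phiA :: "real \<Rightarrow> real \<Rightarrow> real" where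
  "phiA r s = (1 + eta r s) / 2"

definition phiB :: "real \<Rightarrow> real \<Rightarrow> real" where
  "phiB r s = (1 - xi r s) / 2 * ((1 - eta r s) / 2)"

definition phiC :: "real \<Rightarrow> real \<Rightarrow> real" where
  "phiC r s = (1 + xi r s) / 2 * ((1 - eta r s) / 2)"

definition phiEA :: "nat \<Rightarrow> real \<Rightarrow> real \<Rightarrow> real" where
  "phiEA m r s = (1 + xi r s) / 2 * ((1 - xi r s) / 2) * jacobiP (m - 1) 2 2 (xi r s)
      * ((1 - eta r s) / 2) ^ (m + 1)"

definition phiEB :: "nat \<Rightarrow> real \<Rightarrow> real \<Rightarrow> real" where
  "phiEB m r s = (1 + xi r s) / 2 * ((1 - eta r s) / 2) * ((1 + eta r s) / 2)
      * jacobiP (m - 1) 2 2 (eta r s)"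

definition phiEC :: "nat \<Rightarrow> real \<Rightarrow> real \<Rightarrow> real" where
  "phiEC m r s = (-1) ^ (m - 1) * ((1 - xi r s) / 2) * ((1 - eta r s) / 2) * ((1 + eta r s) / 2)
      * jacobiP (m - 1) 2 2 (eta r s)"

definition phiI :: "nat \<Rightarrow> nat \<Rightarrow> real \<Rightarrow> real \<Rightarrow> real" where
  "phiI m n r s = (1 - xi r s) / 2 * ((1 + xi r s) / 2) * jacobiP m 2 2 (xi r s)
      * ((1 - eta r s) / 2) ^ (m + 2) * ((1 + eta r s) / 2) * jacobiP n (2 * m + 5) 2 (eta r s)"

definition Phi_mu0 :: "nat \<Rightarrow> (real \<Rightarrow> real \<Rightarrow> real) list" where
  "Phi_mu0 p = [phiA]
     @ [phiEB m. m \<leftarrow> [1..<p - 1]]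
     @ [phiEC m. m \<leftarrow> [1..<p - 1]]
     @ [phiI m n. m \<leftarrow> [0..<p + 1], n \<leftarrow> [0..<p + 1], m + n + 4 \<le> p]"

definition Phi_star :: "nat \<Rightarrow> (real \<Rightarrow> real \<Rightarrow> real) list" where
  "Phi_star p = [phiEA m. m \<leftarrow> [1..<p]]
     @ [phiI m n. m \<leftarrow> [0..<p + 1], n \<leftarrow> [0..<p + 1], m + n + 3 \<le> p]"

definition gram :: "nat \<Rightarrow> real mat" where
  "gram p = Matrix.mat (length (Phi_mu0 p)) (length (Phi_star p))
     (\<lambda>(i, j). integral Omega_ref (\<lambda>(r, s). (Phi_mu0 p ! i) r s * (Phi_star p ! j) r s))"

end

theory Submission
  imports Defs "HOL-Computational_Algebra.Polynomial"
begin


definition JP :: "nat \<Rightarrow> nat \<Rightarrow> nat \<Rightarrow> real poly" where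
  "JP n a b = (\<Sum>k\<le>n. Polynomial.smult (real ((n + a) choose (n - k)) * real ((n + b) choose k))
       ([:-1/2, 1/2:] ^ k * [:1/2, 1/2:] ^ (n - k)))"

lemma poly_JP: "poly (JP n a b) z = jacobiP n a b z"
  by (simp add: JP_def jacobiP_def poly_sum algebra_simps diff_divide_distrib add_divide_distrib)

lemma JP_term_degree: "k \<le> n \<Longrightarrow> Polynomial.degree (([:-1/2, 1/2:]::real poly) ^ k * [:1/2, 1/2:] ^ (n - k)) = n"
  by (simp add: degree_mult_eq degree_power_eq)

lemma JP_term_coeff: "k \<le> n \<Longrightarrow> Polynomial.coeff (([:-1/2, 1/2:]::real poly) ^ k * [:1/2, 1/2:] ^ (n - k)) n = (1/2)^n"
proof -
  assume kn: "k \<le> n"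
  have "Polynomial.coeff (([:-1/2, 1/2:]::real poly) ^ k * [:1/2, 1/2:] ^ (n - k)) n
      = lead_coeff (([:-1/2, 1/2:]::real poly) ^ k * [:1/2, 1/2:] ^ (n - k))"
    using JP_term_degree[OF kn] by simp
  also have "\<dots> = (1/2)^k * (1/2)^(n-k)" by (simp add: lead_coeff_mult lead_coeff_power)
  finally show ?thesis using kn by (simp add: power_add[symmetric])
qed

lemma JP_degree_le: "Polynomial.degree (JP n a b) \<le> n"
  unfolding JP_def
proof (rule degree_sum_le)
  fix k assume "k \<in> {..n}"
  then have "Polynomial.degree (([:-1/2, 1/2:]::real poly) ^ k * [:1/2, 1/2:] ^ (n - k)) = n"
    by (intro JP_term_degree) simp
  then show "Polynomial.degree (Polynomial.smult (real ((n + a) choose (n - k)) * real ((n + b) choose k))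
       (([:-1/2, 1/2:]::real poly) ^ k * [:1/2, 1/2:] ^ (n - k))) \<le> n"
    by (metis degree_smult_le)
qed simp

lemma JP_coeff_top: "Polynomial.coeff (JP n a b) n > 0"
proof -
  have "Polynomial.coeff (JP n a b) n = (\<Sum>k\<le>n. (real ((n + a) choose (n - k)) * real ((n + b) choose k)) *
     Polynomial.coeff (([:-1/2, 1/2:]::real poly) ^ k * [:1/2, 1/2:] ^ (n - k)) n)"
    unfolding JP_def coeff_sum coeff_smult by (rule refl)
  also have "\<dots> = (\<Sum>k\<le>n. (real ((n + a) choose (n - k)) * real ((n + b) choose k)) * (1/2)^n)"
  proof (rule sum.cong)
    fix k assume "k \<in> {..n}"
    then show "(real ((n + a) choose (n - k)) * real ((n + b) choose k)) *
     Polynomial.coeff (([:-1/2, 1/2:]::real poly) ^ k * [:1/2, 1/2:] ^ (n - k)) n =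
      (real ((n + a) choose (n - k)) * real ((n + b) choose k)) * (1/2)^n"
      using JP_term_coeff[of k n] by simp
  qed (rule refl)
  also have "\<dots> \<ge> (real ((n + a) choose (n - 0)) * real ((n + b) choose 0)) * (1/2)^n"
    by (rule member_le_sum) auto
  moreover have "(real ((n + a) choose (n - 0)) * real ((n + b) choose 0)) * (1/2::real)^n > 0"
    by simp
  ultimately show ?thesis by linarith
qed

lemma degree_JP [simp]: "Polynomial.degree (JP n a b) = n"
  using JP_degree_le JP_coeff_top by (metis le_antisym le_degree less_irrefl)

lemma family_indep:
  fixes P :: "nat \<Rightarrow> real poly"
  assumes deg: "\<And>k. Polynomial.degree (P k) = k" and nz: "\<And>k. P k \<noteq> 0"
  shows "(\<Sum>k\<le>K. Polynomial.smult (c k) (P k)) = 0 \<Longrightarrow> k \<le> K \<Longrightarrow> c k = 0"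
proof (induction K arbitrary: k)
  case 0
  then show ?case using nz by simp
next
  case (Suc K)
  have d: "Polynomial.degree (\<Sum>k\<le>K. Polynomial.smult (c k) (P k)) \<le> K"
    by (rule degree_sum_le) (auto intro: order.trans[OF degree_smult_le] simp: deg)
  have "Polynomial.coeff (\<Sum>k\<le>Suc K. Polynomial.smult (c k) (P k)) (Suc K) = Polynomial.coeff (\<Sum>k\<le>K. Polynomial.smult (c k) (P k)) (Suc K) + c (Suc K) * Polynomial.coeff (P (Suc K)) (Suc K)"
    by (simp add: coeff_sum)
  also have "Polynomial.coeff (\<Sum>k\<le>K. Polynomial.smult (c k) (P k)) (Suc K) = 0"
    using d by (simp add: coeff_eq_0)
  finally have e: "Polynomial.coeff (\<Sum>k\<le>Suc K. Polynomial.smult (c k) (P k)) (Suc K) = c (Suc K) * Polynomial.coeff (P (Suc K)) (Suc K)" by simp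
  have "Polynomial.coeff (\<Sum>k\<le>Suc K. Polynomial.smult (c k) (P k)) (Suc K) = 0"
    using Suc.prems(1) by (simp del: sum.atMost_Suc)
  with e have "c (Suc K) * Polynomial.coeff (P (Suc K)) (Suc K) = 0" by simp
  moreover have "Polynomial.coeff (P (Suc K)) (Suc K) \<noteq> 0" using nz deg by (metis leading_coeff_0_iff)
  ultimately have cS: "c (Suc K) = 0" by simp
  then have "(\<Sum>k\<le>K. Polynomial.smult (c k) (P k)) = 0" using Suc.prems by simp
  then show ?case using Suc cS by (cases "k = Suc K") auto
qed

lemma family_span:
  fixes P :: "nat \<Rightarrow> real poly"
  assumes deg: "\<And>k. Polynomial.degree (P k) = k" and nz: "\<And>k. P k \<noteq> 0"
  shows "Polynomial.degree q \<le> d \<Longrightarrow> \<exists>c. q = (\<Sum>k\<le>d. Polynomial.smult (c k) (P k))"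
proof (induction d arbitrary: q)
  case 0
  then obtain a where q: "q = [:a:]" by (metis degree0_coeffs le_zero_eq)
  have "Polynomial.degree (P 0) = 0" by (rule deg)
  then obtain b where b: "P 0 = [:b:]" "b \<noteq> 0" using nz by (metis degree0_coeffs pCons_0_0)
  show ?case by (rule exI[of _ "\<lambda>_. a / b"]) (use q b in simp)
next
  case (Suc d)
  define t where "t = Polynomial.coeff q (Suc d) / lead_coeff (P (Suc d))"
  have lc: "lead_coeff (P (Suc d)) \<noteq> 0" using nz by simp
  have "Polynomial.degree (q - Polynomial.smult t (P (Suc d))) \<le> d"
  proof (rule degree_le)
    show "\<forall>i>d. Polynomial.coeff (q - Polynomial.smult t (P (Suc d))) i = 0"
    proof (intro allI impI)
      fix i assume "d < i"
      show "Polynomial.coeff (q - Polynomial.smult t (P (Suc d))) i = 0"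
      proof (cases "i = Suc d")
        case True
        then show ?thesis using lc deg[of "Suc d"] by (simp add: t_def)
      next
        case False
        then have "i > Suc d" using \<open>d < i\<close> by simp
        then have "Polynomial.coeff q i = 0" using Suc.prems by (intro coeff_eq_0) simp
        moreover have "Polynomial.coeff (P (Suc d)) i = 0" using \<open>i > Suc d\<close> deg[of "Suc d"] by (intro coeff_eq_0) simp
        ultimately show ?thesis by simp
      qed
    qed
  qed
  then obtain c where c: "q - Polynomial.smult t (P (Suc d)) = (\<Sum>k\<le>d. Polynomial.smult (c k) (P k))" using Suc.IH by blast
  have "(\<Sum>k\<le>Suc d. Polynomial.smult ((c(Suc d := t)) k) (P k))
      = (\<Sum>k\<le>d. Polynomial.smult ((c(Suc d := t)) k) (P k)) + Polynomial.smult t (P (Suc d))"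
    by simp
  also have "(\<Sum>k\<le>d. Polynomial.smult ((c(Suc d := t)) k) (P k)) = (\<Sum>k\<le>d. Polynomial.smult (c k) (P k))"
    by (intro sum.cong) auto
  also have "\<dots> = q - Polynomial.smult t (P (Suc d))" by (rule c[symmetric])
  finally show ?case by (intro exI[of _ "c(Suc d := t)"]) simp
qed


definition pf :: "(real \<Rightarrow> real) \<Rightarrow> bool" where
  "pf f \<longleftrightarrow> (\<exists>q. \<forall>x. f x = poly q x)"

lemma pf_const [intro]: "pf (\<lambda>x. c)"
  unfolding pf_def by (rule exI[of _ "[:c:]"]) simp

lemma pf_id [intro]: "pf (\<lambda>x. x)"
  unfolding pf_def by (rule exI[of _ "[:0,1:]"]) simp

lemma pf_add [intro]: "pf f \<Longrightarrow> pf g \<Longrightarrow> pf (\<lambda>x. f x + g x)"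
  unfolding pf_def by (metis poly_add)

lemma pf_diff [intro]: "pf f \<Longrightarrow> pf g \<Longrightarrow> pf (\<lambda>x. f x - g x)"
  unfolding pf_def by (metis poly_diff)

lemma pf_mult [intro]: "pf f \<Longrightarrow> pf g \<Longrightarrow> pf (\<lambda>x. f x * g x)"
  unfolding pf_def by (metis poly_mult)

lemma pf_divide [intro]: "pf f \<Longrightarrow> pf (\<lambda>x. f x / c)"
proof -
  assume "pf f"
  then have "pf (\<lambda>x. f x * (1/c))" by (intro pf_mult pf_const)
  then show ?thesis by simp
qed

lemma pf_power [intro]: "pf f \<Longrightarrow> pf (\<lambda>x. f x ^ k)"
  by (induction k) (auto simp del: power_Suc simp: power_Suc)

lemma pf_sum [intro]: "(\<And>i. i \<in> I \<Longrightarrow> pf (\<lambda>x. f i x)) \<Longrightarrow> pf (\<lambda>x. \<Sum>i\<in>I. f i x)"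
proof (induction I rule: infinite_finite_induct)
  case (infinite A) then show ?case by auto
next
  case empty then show ?case by auto
next
  case (insert i F) then show ?case by (simp add: pf_add)
qed

lemma pf_jacobi [intro]: "pf f \<Longrightarrow> pf (\<lambda>x. jacobiP n a b (f x))"
  unfolding pf_def by (metis poly_JP poly_pcompose)

lemma pf_zero:
  assumes "pf f" "infinite {x. f x = 0}"
  shows "f x = 0"
proof -
  obtain q where q: "\<And>x. f x = poly q x" using assms(1) unfolding pf_def by blast
  have "q = 0"
    using assms(2) poly_roots_finite[of q] q by auto
  then show ?thesis using q by simp
qed

lemma my_infinite_Ioo: "(a::real) < b \<Longrightarrow> infinite {a<..<b}"
  by (simp add: infinite_Ioo)

lemma pf_zero_Ioo:
  assumes "pf f" "a < b" "\<And>x. a < x \<Longrightarrow> x < b \<Longrightarrow> f x = 0"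
  shows "f x = 0"
proof (rule pf_zero[OF assms(1)])
  have "{a<..<b} \<subseteq> {x. f x = 0}" using assms(3) by auto
  then show "infinite {x. f x = 0}" using my_infinite_Ioo[OF assms(2)] finite_subset by blast
qed

lemma jacobi_indep:
  assumes "\<And>x. (\<Sum>k\<le>K. c k * jacobiP k a b x) = 0" "k \<le> K"
  shows "c k = 0"
proof -
  have "poly (\<Sum>k\<le>K. Polynomial.smult (c k) (JP k a b)) x = 0" for x
    using assms(1)[of x] by (simp add: poly_sum poly_JP)
  then have "(\<Sum>k\<le>K. Polynomial.smult (c k) (JP k a b)) = 0"
    using poly_all_0_iff_0 by blast
  moreover have nz: "\<And>k. JP k a b \<noteq> 0" by (metis JP_coeff_top coeff_0 less_irrefl)
  moreover have dg: "\<And>k. Polynomial.degree (JP k a b) = k" by simp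
  ultimately show ?thesis
    using family_indep[where P="\<lambda>k. JP k a b", OF dg nz] assms(2) by blast
qed


inductive_set fspan :: "('a \<Rightarrow> 'b \<Rightarrow> real) set \<Rightarrow> ('a \<Rightarrow> 'b \<Rightarrow> real) set" for S where
  zero: "(\<lambda>x y. 0) \<in> fspan S"
| step: "g \<in> S \<Longrightarrow> f \<in> fspan S \<Longrightarrow> (\<lambda>x y. c * g x y + f x y) \<in> fspan S"

lemma fspan_base: "g \<in> S \<Longrightarrow> g \<in> fspan S"
  using fspan.step[OF _ fspan.zero, of g S 1] by simp

lemma fspan_eq: "f \<in> fspan S \<Longrightarrow> (\<And>x y. g x y = f x y) \<Longrightarrow> g \<in> fspan S"
proof -
  assume "f \<in> fspan S" "\<And>x y. g x y = f x y"
  then have "g = f" by (intro ext) auto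
  then show ?thesis using \<open>f \<in> fspan S\<close> by simp
qed

lemma fspan_scale: "f \<in> fspan S \<Longrightarrow> (\<lambda>x y. c * f x y) \<in> fspan S"
proof (induction f rule: fspan.induct)
  case zero then show ?case by (simp add: fspan.zero)
next
  case (step g f d)
  have "(\<lambda>x y. (c*d) * g x y + c * f x y) \<in> fspan S" by (rule fspan.step[OF step(1,3)])
  then show ?case by (rule fspan_eq) (simp add: algebra_simps)
qed

lemma fspan_add: "f \<in> fspan S \<Longrightarrow> h \<in> fspan S \<Longrightarrow> (\<lambda>x y. f x y + h x y) \<in> fspan S"
proof (induction f rule: fspan.induct)
  case zero then show ?case by simp
next
  case (step g f d)
  have "(\<lambda>x y. d * g x y + (f x y + h x y)) \<in> fspan S" by (rule fspan.step[OF step(1)]) (use step in auto)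
  then show ?case by (rule fspan_eq) (simp add: algebra_simps)
qed

lemma fspan_sum: "finite I \<Longrightarrow> (\<And>i. i \<in> I \<Longrightarrow> f i \<in> fspan S) \<Longrightarrow> (\<lambda>x y. \<Sum>i\<in>I. f i x y) \<in> fspan S"
proof (induction I rule: finite_induct)
  case empty then show ?case by (simp add: fspan.zero)
next
  case (insert i F)
  then show ?case by (simp add: fspan_add)
qed

lemma fspan_map:
  "f \<in> fspan S \<Longrightarrow> (\<lambda>r s. f (h r s) (k r s)) \<in> fspan ((\<lambda>g r s. g (h r s) (k r s)) ` S)"
proof (induction f rule: fspan.induct)
  case zero then show ?case by (simp add: fspan.zero)
next
  case (step g f c)
  show ?case by (rule fspan.step[OF _ step(3)]) (use step(1) in auto)
qed

lemma fspan_list: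
  "f \<in> fspan (set L) \<Longrightarrow> \<exists>z. \<forall>x y. f x y = (\<Sum>j<length L. z j * (L ! j) x y)"
proof (induction f rule: fspan.induct)
  case zero then show ?case by (intro exI[of _ "\<lambda>_. 0"]) simp
next
  case (step g f c)
  obtain z where z: "\<forall>x y. f x y = (\<Sum>j<length L. z j * (L ! j) x y)" using step by blast
  obtain j0 where j0: "j0 < length L" "L ! j0 = g" using step(1) by (auto simp: in_set_conv_nth)
  define z' where "z' = (\<lambda>j. z j + (if j = j0 then c else 0))"
  have key: "(\<Sum>j<length L. z' j * (L ! j) x y) = c * g x y + f x y" for x y
  proof -
    have "(\<Sum>j<length L. z' j * (L ! j) x y) = (\<Sum>j<length L. z j * (L ! j) x y) + (\<Sum>j<length L. (if j = j0 then c else 0) * (L ! j) x y)"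
      unfolding z'_def by (simp add: algebra_simps sum.distrib)
    also have "(\<Sum>j<length L. (if j = j0 then c else 0) * (L ! j) x y) = (\<Sum>j<length L. if j = j0 then c * (L ! j) x y else 0)"
      by (intro sum.cong) auto
    also have "\<dots> = c * g x y" using j0 by (simp add: sum.delta)
    finally show ?thesis using z by simp
  qed
  show ?case by (intro exI[of _ z']) (simp add: key)
qed

definition EAc :: "nat \<Rightarrow> real \<Rightarrow> real \<Rightarrow> real" where
  "EAc m x y = (1 + x) / 2 * ((1 - x) / 2) * jacobiP (m - 1) 2 2 x * ((1 - y) / 2) ^ (m + 1)"

definition Ic :: "nat \<Rightarrow> nat \<Rightarrow> real \<Rightarrow> real \<Rightarrow> real" where
  "Ic m n x y = (1 - x) / 2 * ((1 + x) / 2) * jacobiP m 2 2 x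
      * ((1 - y) / 2) ^ (m + 2) * ((1 + y) / 2) * jacobiP n (2 * m + 5) 2 y"

definition Qs :: "nat \<Rightarrow> (real \<Rightarrow> real \<Rightarrow> real) set" where
  "Qs p = EAc ` {1..<p} \<union> (\<lambda>(m, n). Ic m n) ` {(m, n). m + n + 3 \<le> p}"

lemma JP_nz: "JP k a b \<noteq> 0" by (metis JP_coeff_top coeff_0 less_irrefl)

lemma span_core:
  assumes "k + Polynomial.degree g \<le> p - 2" "p \<ge> 2"
  shows "(\<lambda>x y. (1 + x) / 2 * ((1 - x) / 2) * jacobiP k 2 2 x * ((1 - y) / 2) ^ (k + 2) * poly g y) \<in> fspan (Qs p)"
proof (cases "Polynomial.degree g = 0")
  case True
  then obtain c where g: "g = [:c:]" by (meson degree_eq_zeroE)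
  have "EAc (k+1) \<in> Qs p" unfolding Qs_def using assms by auto
  then have "(\<lambda>x y. c * EAc (k+1) x y) \<in> fspan (Qs p)" by (intro fspan_scale fspan_base)
  then show ?thesis by (rule fspan_eq) (simp add: g EAc_def algebra_simps)
next
  case False
  define h where "h = synthetic_div g (-1)"
  have gh: "[:1, 1:] * h + [:poly g (-1):] = g"
    using synthetic_div_correct'[of "-1" g] by (simp add: h_def)
  have dh: "Polynomial.degree h \<le> p - 3 - k"
    using assms False by (simp add: h_def degree_synthetic_div)
  obtain \<beta> where \<beta>: "h = (\<Sum>n\<le>p - 3 - k. Polynomial.smult (\<beta> n) (JP n (2*k+5) 2))"
    using family_span[where P="\<lambda>n. JP n (2*k+5) 2", OF degree_JP JP_nz dh] by blast
  have pg: "poly g y = poly g (-1) + (1 + y) * (\<Sum>n\<le>p - 3 - k. \<beta> n * jacobiP n (2*k+5) 2 y)" for y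
  proof -
    have "poly g y = poly ([:1, 1:] * h + [:poly g (-1):]) y" by (simp only: gh)
    also have "\<dots> = poly g (-1) + (1 + y) * poly h y" by (simp add: algebra_simps)
    finally show ?thesis by (simp add: \<beta> poly_sum poly_JP)
  qed
  have mem1: "(\<lambda>x y. poly g (-1) * EAc (k+1) x y) \<in> fspan (Qs p)"
    using assms by (intro fspan_scale fspan_base) (auto simp: Qs_def)
  have mem2: "(\<lambda>x y. \<Sum>n\<le>p - 3 - k. (2 * \<beta> n) * Ic k n x y) \<in> fspan (Qs p)"
  proof (rule fspan_sum)
    fix n assume "n \<in> {..p - 3 - k}"
    then have "Ic k n \<in> Qs p" unfolding Qs_def using assms False by auto
    then show "(\<lambda>x y. (2 * \<beta> n) * Ic k n x y) \<in> fspan (Qs p)" by (intro fspan_scale fspan_base)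
  qed simp
  from fspan_add[OF mem1 mem2] show ?thesis
  proof (rule fspan_eq)
    fix x y :: real
    define C where "C = (1 + x) / 2 * ((1 - x) / 2) * jacobiP k 2 2 x * ((1 - y) / 2) ^ (k + 2)"
    have eA: "EAc (k+1) x y = C" by (simp add: EAc_def C_def)
    have eI: "Ic k n x y = C * ((1 + y) / 2) * jacobiP n (2*k+5) 2 y" for n
      by (simp add: Ic_def C_def ac_simps)
    have es: "(\<Sum>n\<le>p - 3 - k. (2 * \<beta> n) * Ic k n x y) = C * (1 + y) * (\<Sum>n\<le>p - 3 - k. \<beta> n * jacobiP n (2*k+5) 2 y)"
      unfolding eI sum_distrib_left by (intro sum.cong refl) (simp add: field_simps)
    show "(1 + x) / 2 * ((1 - x) / 2) * jacobiP k 2 2 x * ((1 - y) / 2) ^ (k + 2) * poly g y =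
       poly g (-1) * EAc (k+1) x y + (\<Sum>n\<le>p - 3 - k. (2 * \<beta> n) * Ic k n x y)"
    proof -
      let ?S = "\<Sum>n\<le>p - 3 - k. \<beta> n * jacobiP n (2*k+5) 2 y"
      have "(1 + x) / 2 * ((1 - x) / 2) * jacobiP k 2 2 x * ((1 - y) / 2) ^ (k + 2) * poly g y = C * poly g y"
        unfolding C_def by (rule refl)
      also have "\<dots> = C * (poly g (-1) + (1 + y) * ?S)" by (subst pg) (rule refl)
      also have "\<dots> = poly g (-1) * C + C * (1 + y) * ?S" by (simp only: ring_distribs mult_ac)
      also have "\<dots> = poly g (-1) * EAc (k+1) x y + (\<Sum>n\<le>p - 3 - k. (2 * \<beta> n) * Ic k n x y)"
        by (simp only: eA es)
      finally show ?thesis .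
    qed
  qed
qed

lemma span_gen:
  assumes "Polynomial.degree f \<le> K" "K + Polynomial.degree g \<le> p - 2" "p \<ge> 2"
  shows "(\<lambda>x y. (1 + x) / 2 * ((1 - x) / 2) * ((1 - y) / 2) ^ 2 * poly f x * ((1 - y) / 2) ^ K * poly g y) \<in> fspan (Qs p)"
proof -
  obtain \<gamma> where \<gamma>: "f = (\<Sum>k\<le>K. Polynomial.smult (\<gamma> k) (JP k 2 2))"
    using family_span[where P="\<lambda>n. JP n 2 2", OF degree_JP JP_nz assms(1)] by blast
  define G where "G k = g * [:1/2, -1/2:] ^ (K - k)" for k
  have PG: "poly (G k) y = poly g y * ((1 - y)/2) ^ (K - k)" for k y
    by (simp add: G_def poly_power) (simp add: field_simps)
  have dG: "k + Polynomial.degree (G k) \<le> p - 2" if "k \<le> K" for k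
  proof -
    have "Polynomial.degree (G k) \<le> Polynomial.degree g + Polynomial.degree (([:1/2, -1/2:]::real poly) ^ (K - k))"
      unfolding G_def by (rule degree_mult_le)
    also have "Polynomial.degree (([:1/2, -1/2:]::real poly) ^ (K - k)) \<le> K - k"
      using degree_power_le[of "([:1/2, -1/2:]::real poly)" "K-k"] by simp
    finally show ?thesis using assms that by linarith
  qed
  have mem: "(\<lambda>x y. \<Sum>k\<le>K. \<gamma> k * ((1 + x) / 2 * ((1 - x) / 2) * jacobiP k 2 2 x * ((1 - y) / 2) ^ (k + 2) * poly (G k) y)) \<in> fspan (Qs p)"
  proof (rule fspan_sum)
    fix k assume "k \<in> {..K}"
    then have "k + Polynomial.degree (G k) \<le> p - 2" by (intro dG) simp
    then show "(\<lambda>x y. \<gamma> k * ((1 + x) / 2 * ((1 - x) / 2) * jacobiP k 2 2 x * ((1 - y) / 2) ^ (k + 2) * poly (G k) y)) \<in> fspan (Qs p)"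
      by (intro fspan_scale span_core assms(3))
  qed simp
  then show ?thesis
  proof (rule fspan_eq)
    fix x y :: real
    have e: "((1 - y) / 2) ^ (k + 2) * ((1 - y) / 2) ^ (K - k) = ((1 - y) / 2) ^ 2 * ((1 - y) / 2) ^ K"
      if "k \<in> {..K}" for k
      using that by (simp add: power_add[symmetric])
    have "(1 + x) / 2 * ((1 - x) / 2) * ((1 - y) / 2) ^ 2 * poly f x * ((1 - y) / 2) ^ K * poly g y
       = (\<Sum>k\<le>K. \<gamma> k * ((1 + x) / 2 * ((1 - x) / 2) * jacobiP k 2 2 x * poly g y *
             (((1 - y) / 2) ^ 2 * ((1 - y) / 2) ^ K)))"
    proof -
      have pf: "poly f x = (\<Sum>k\<le>K. \<gamma> k * jacobiP k 2 2 x)" by (simp add: \<gamma> poly_sum poly_JP)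
      have "(1 + x) / 2 * ((1 - x) / 2) * ((1 - y) / 2) ^ 2 * poly f x * ((1 - y) / 2) ^ K * poly g y
         = (\<Sum>k\<le>K. \<gamma> k * jacobiP k 2 2 x) * ((1 + x) / 2 * ((1 - x) / 2) * poly g y * (((1 - y) / 2) ^ 2 * ((1 - y) / 2) ^ K))"
        unfolding pf by (simp only: ac_simps)
      also have "\<dots> = (\<Sum>k\<le>K. \<gamma> k * jacobiP k 2 2 x * ((1 + x) / 2 * ((1 - x) / 2) * poly g y * (((1 - y) / 2) ^ 2 * ((1 - y) / 2) ^ K)))"
        by (rule sum_distrib_right)
      also have "\<dots> = (\<Sum>k\<le>K. \<gamma> k * ((1 + x) / 2 * ((1 - x) / 2) * jacobiP k 2 2 x * poly g y *
             (((1 - y) / 2) ^ 2 * ((1 - y) / 2) ^ K)))"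
        by (intro sum.cong refl) (simp only: ac_simps)
      finally show ?thesis .
    qed
    also have "\<dots> = (\<Sum>k\<le>K. \<gamma> k * ((1 + x) / 2 * ((1 - x) / 2) * jacobiP k 2 2 x * poly g y *
             (((1 - y) / 2) ^ (k + 2) * ((1 - y) / 2) ^ (K - k))))"
      by (intro sum.cong refl) (simp only: e)
    also have "\<dots> = (\<Sum>k\<le>K. \<gamma> k * ((1 + x) / 2 * ((1 - x) / 2) * jacobiP k 2 2 x * ((1 - y) / 2) ^ (k + 2) * poly (G k) y))"
      by (intro sum.cong refl) (simp only: PG ac_simps)
    finally show "(1 + x) / 2 * ((1 - x) / 2) * ((1 - y) / 2) ^ 2 * poly f x * ((1 - y) / 2) ^ K * poly g y
       = (\<Sum>k\<le>K. \<gamma> k * ((1 + x) / 2 * ((1 - x) / 2) * jacobiP k 2 2 x * ((1 - y) / 2) ^ (k + 2) * poly (G k) y))" .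
  qed
qed


definition PS :: "nat \<Rightarrow> nat \<Rightarrow> (nat \<times> nat) list" where
  "PS k p = [(m, n). m \<leftarrow> [0..<p + 1], n \<leftarrow> [0..<p + 1], m + n + k \<le> p]"

lemma comp_pairs:
  "[f m n. m \<leftarrow> xs, n \<leftarrow> ys, P m n] = map (\<lambda>(m, n). f m n) [(m, n). m \<leftarrow> xs, n \<leftarrow> ys, P m n]"
proof (induction xs)
  case Nil then show ?case by simp
next
  case (Cons a xs)
  have "[f a n. n \<leftarrow> ys, P a n] = map (\<lambda>(m, n). f m n) [(a, n). n \<leftarrow> ys, P a n]"
    by (induction ys) auto
  then show ?case using Cons by simp
qed

lemma PS_filter: "PS k p = filter (\<lambda>(m, n). m + n + k \<le> p) (List.product [0..<p + 1] [0..<p + 1])"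
proof -
  have "[(m, n). m \<leftarrow> xs, n \<leftarrow> ys, m + n + k \<le> p] = filter (\<lambda>(m, n). m + n + k \<le> p) (List.product xs ys)" for xs ys :: "nat list"
  proof (induction xs)
    case Nil then show ?case by simp
  next
    case (Cons a xs)
    have "[(a, n). n \<leftarrow> ys, a + n + k \<le> p] = filter (\<lambda>(m, n). m + n + k \<le> p) (map (Pair a) ys)"
      by (induction ys) auto
    then show ?case using Cons by simp
  qed
  then show ?thesis unfolding PS_def .
qed

lemma PS_distinct: "distinct (PS k p)"
  unfolding PS_filter by (intro distinct_filter distinct_product) auto

lemma PS_set: "set (PS k p) = {(m, n). m \<le> p \<and> n \<le> p \<and> m + n + k \<le> p}"
  unfolding PS_filter by auto

lemma card_tri: "card {(m, n). m + n < (L::nat)} = L * (L + 1) div 2"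
proof (induction L)
  case 0 then show ?case by simp
next
  case (Suc L)
  have eq: "{(m, n). m + n < Suc L} = {(m, n). m + n < L} \<union> (\<lambda>m. (m, L - m)) ` {..L}"
    by auto
  have fin: "finite {(m, n). m + n < (L::nat)}"
    by (rule finite_subset[of _ "{..<L} \<times> {..<L}"]) auto
  have disj: "{(m, n). m + n < L} \<inter> (\<lambda>m. (m, L - m)) ` {..L} = {}" by auto
  have inj: "inj_on (\<lambda>m. (m, L - m)) {..L}" by (auto intro: inj_onI)
  have "card {(m, n). m + n < Suc L} = L * (L + 1) div 2 + (L + 1)"
    unfolding eq using fin disj inj Suc by (simp add: card_Un_disjoint card_image)
  also have "\<dots> = Suc L * (Suc L + 1) div 2" by simp
  finally show ?case .
qed

lemma length_PS: "k \<ge> 1 \<Longrightarrow> length (PS k p) = (p + 1 - k) * (p + 1 - k + 1) div 2"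
proof -
  assume k: "k \<ge> 1"
  have "length (PS k p) = card (set (PS k p))" using PS_distinct distinct_card by metis
  also have "set (PS k p) = {(m, n). m + n < p + 1 - k}" unfolding PS_set using k by auto
  finally show ?thesis using card_tri by simp
qed

definition cB :: "nat \<Rightarrow> real \<Rightarrow> real \<Rightarrow> real" where
  "cB m x y = (1 + x) / 2 * ((1 - y) / 2) * jacobiP (m - 1) 2 2 y / 2"

definition cC :: "nat \<Rightarrow> real \<Rightarrow> real \<Rightarrow> real" where
  "cC m x y = (-1) ^ (m - 1) * ((1 - x) / 2) * ((1 - y) / 2) * jacobiP (m - 1) 2 2 y / 2"

definition cI :: "nat \<Rightarrow> nat \<Rightarrow> real \<Rightarrow> real \<Rightarrow> real" where
  "cI m n x y = (1 - x) / 2 * ((1 + x) / 2) * jacobiP m 2 2 x * ((1 - y) / 2) ^ (m + 2) * jacobiP n (2 * m + 5) 2 y / 2"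

definition CL :: "nat \<Rightarrow> (real \<Rightarrow> real \<Rightarrow> real) list" where
  "CL p = (\<lambda>x y. 1/2) # map cB [1..<p - 1] @ map cC [1..<p - 1] @ map (\<lambda>(m, n). cI m n) (PS 4 p)"

definition chi :: "(real \<Rightarrow> real \<Rightarrow> real) \<Rightarrow> real \<Rightarrow> real \<Rightarrow> real" where
  "chi c = (\<lambda>r s. (1 + s) * c (xi r s) s)"

definition SL :: "nat \<Rightarrow> (real \<Rightarrow> real \<Rightarrow> real) list" where
  "SL p = map EAc [1..<p] @ map (\<lambda>(m, n). Ic m n) (PS 3 p)"

definition lift :: "(real \<Rightarrow> real \<Rightarrow> real) \<Rightarrow> real \<Rightarrow> real \<Rightarrow> real" where
  "lift g = (\<lambda>r s. g (xi r s) s)"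

lemma Phi_mu0_eq: "Phi_mu0 p = map chi (CL p)"
proof -
  have A: "phiA = chi (\<lambda>x y. 1/2)" by (intro ext) (simp add: phiA_def chi_def eta_def)
  have B: "phiEB m = chi (cB m)" for m by (intro ext) (simp add: phiEB_def chi_def eta_def cB_def field_simps)
  have C: "phiEC m = chi (cC m)" for m by (intro ext) (simp add: phiEC_def chi_def eta_def cC_def field_simps)
  have I: "phiI m n = chi (cI m n)" for m n by (intro ext) (simp add: phiI_def chi_def eta_def cI_def field_simps)
  show ?thesis
    unfolding Phi_mu0_def CL_def comp_pairs[where f=phiI] PS_def[symmetric]
    by (simp add: A B C I comp_def case_prod_beta' cong: map_cong)
qed

lemma Phi_star_eq: "Phi_star p = map lift (SL p)"
proof -
  have A: "phiEA m = lift (EAc m)" for m by (intro ext) (simp add: phiEA_def lift_def eta_def EAc_def)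
  have I: "phiI m n = lift (Ic m n)" for m n by (intro ext) (simp add: phiI_def lift_def eta_def Ic_def)
  show ?thesis
    unfolding Phi_star_def SL_def comp_pairs[where f=phiI] PS_def[symmetric]
    by (simp add: A I comp_def case_prod_beta' cong: map_cong)
qed

lemma set_SL: "set (SL p) = Qs p"
proof -
  have "{(m, n). m \<le> p \<and> n \<le> p \<and> m + n + 3 \<le> p} = {(m, n). m + n + 3 \<le> p}" by auto
  then show ?thesis unfolding SL_def Qs_def set_append set_map PS_set by simp
qed

lemma length_CL: "p \<ge> 2 \<Longrightarrow> length (CL p) = p * (p - 1) div 2"
proof -
  assume p: "p \<ge> 2"
  have "length (CL p) = 1 + 2 * (p - 2) + (p - 3) * (p - 3 + 1) div 2"
    unfolding CL_def using length_PS[of 4 p] by simp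
  also have "\<dots> = p * (p - 1) div 2"
  proof -
    obtain q where q: "p = q + 2" using p by (metis add.commute le_Suc_ex)
    show ?thesis
    proof (cases q)
      case 0 then show ?thesis using q by simp
    next
      case (Suc q')
      then show ?thesis using q by (simp add: algebra_simps)
    qed
  qed
  finally show ?thesis .
qed

lemma length_SL: "p \<ge> 2 \<Longrightarrow> length (SL p) = p * (p - 1) div 2"
proof -
  assume p: "p \<ge> 2"
  have "length (SL p) = (p - 1) + (p - 2) * (p - 2 + 1) div 2"
    unfolding SL_def using length_PS[of 3 p] by simp
  also have "\<dots> = p * (p - 1) div 2"
  proof -
    obtain q where q: "p = q + 2" using p by (metis add.commute le_Suc_ex)
    show ?thesis using q by (simp add: algebra_simps)
  qed
  finally show ?thesis .
qed


definition pt :: "(real \<Rightarrow> real \<Rightarrow> real) \<Rightarrow> real \<Rightarrow> real \<Rightarrow> real" where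
  "pt c = (\<lambda>x y. -4 * ((1 + x) / 2) * ((1 - x) / 2) * ((1 - y) / 2) ^ 2 * c x y)"

lemma pt_span:
  assumes p: "p \<ge> 2" and c: "c \<in> set (CL p)"
  shows "pt c \<in> fspan (Qs p)"
proof -
  let ?G = "\<lambda>f K g. (\<lambda>x y. (1 + x) / 2 * ((1 - x) / 2) * ((1 - y) / 2) ^ 2 * poly f x * ((1 - y) / 2) ^ K * poly g y)"
  from c consider "c = (\<lambda>x y. 1/2)" | m where "m \<in> {1..<p-1}" "c = cB m"
    | m where "m \<in> {1..<p-1}" "c = cC m" | m n where "(m, n) \<in> set (PS 4 p)" "c = cI m n"
    unfolding CL_def by auto
  then show ?thesis
  proof cases
    case 1
    have "?G 1 0 1 \<in> fspan (Qs p)" by (rule span_gen) (use p in auto)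
    then have "(\<lambda>x y. (-2) * ?G 1 0 1 x y) \<in> fspan (Qs p)" by (rule fspan_scale)
    then show ?thesis by (rule fspan_eq) (simp add: 1 pt_def field_simps)
  next
    case (2 m)
    have "?G [:1/2, 1/2:] 1 (JP (m - 1) 2 2) \<in> fspan (Qs p)" by (rule span_gen) (use p 2 in auto)
    then have "(\<lambda>x y. (-2) * ?G [:1/2, 1/2:] 1 (JP (m - 1) 2 2) x y) \<in> fspan (Qs p)" by (rule fspan_scale)
    then show ?thesis by (rule fspan_eq) (simp add: 2 pt_def cB_def poly_JP field_simps)
  next
    case (3 m)
    have "?G [:1/2, -1/2:] 1 (JP (m - 1) 2 2) \<in> fspan (Qs p)" by (rule span_gen) (use p 3 in auto)
    then have "(\<lambda>x y. (- 2 * ((-1) ^ (m - 1))) * ?G [:1/2, -1/2:] 1 (JP (m - 1) 2 2) x y) \<in> fspan (Qs p)" by (rule fspan_scale)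
    then show ?thesis by (rule fspan_eq) (simp add: 3 pt_def cC_def poly_JP field_simps)
  next
    case (4 m n)
    have mn: "m + n + 4 \<le> p" using 4 PS_set by auto
    define f where "f = [:1/2, 1/2:] * [:1/2, -1/2:] * JP m 2 2"
    have df: "Polynomial.degree f \<le> m + 2"
    proof -
      have "Polynomial.degree f \<le> Polynomial.degree ([:1/2, 1/2:] * [:1/2, -1/2:] :: real poly) + Polynomial.degree (JP m 2 2)"
        unfolding f_def by (rule degree_mult_le)
      also have "Polynomial.degree ([:1/2, 1/2:] * [:1/2, -1/2:] :: real poly) \<le> 2"
        using degree_mult_le[of "[:1/2, 1/2:] :: real poly" "[:1/2, -1/2:]"] by simp
      finally show ?thesis by simp
    qed
    have "?G f (m + 2) (JP n (2*m+5) 2) \<in> fspan (Qs p)" by (rule span_gen[OF df]) (use p mn in auto)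
    then have "(\<lambda>x y. (-2) * ?G f (m + 2) (JP n (2*m+5) 2) x y) \<in> fspan (Qs p)" by (rule fspan_scale)
    then show ?thesis by (rule fspan_eq) (simp add: 4 pt_def cI_def f_def poly_JP field_simps)
  qed
qed

lemma set_Phi_star: "set (Phi_star p) = lift ` Qs p"
  unfolding Phi_star_eq set_map set_SL ..

lemma pt_lift_comb:
  assumes p: "p \<ge> 2" and c: "c \<in> set (CL p)"
  shows "\<exists>z. \<forall>r s. lift (pt c) r s = (\<Sum>j<length (Phi_star p). z j * (Phi_star p ! j) r s)"
proof -
  have "(\<lambda>r s. pt c (xi r s) s) \<in> fspan ((\<lambda>g r s. g (xi r s) s) ` Qs p)"
    by (rule fspan_map[OF pt_span[OF p c]])
  then have "lift (pt c) \<in> fspan (set (Phi_star p))"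
    unfolding set_Phi_star lift_def by simp
  then show ?thesis by (rule fspan_list)
qed


lemma sum_split_nat: "(\<Sum>i<(a::nat) + b. f i) = (\<Sum>i<a. f i) + (\<Sum>i<b. (f (a + i) :: real))"
  by (induction b) (auto simp: add.assoc)

lemma lc_append:
  fixes z :: "nat \<Rightarrow> real"
  shows "(\<Sum>i<length (A @ B). z i * ((A @ B) ! i) x y) =
     (\<Sum>i<length A. z i * (A ! i) x y) + (\<Sum>i<length B. z (length A + i) * (B ! i) x y)"
proof -
  have "(\<Sum>i<length (A @ B). z i * ((A @ B) ! i) x y) = (\<Sum>i<length A. z i * ((A @ B) ! i) x y) + (\<Sum>i<length B. z (length A + i) * ((A @ B) ! (length A + i)) x y)"
    unfolding length_append by (rule sum_split_nat[where f="\<lambda>i. z i * ((A @ B) ! i) x y"])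
  also have "(\<Sum>i<length A. z i * ((A @ B) ! i) x y) = (\<Sum>i<length A. z i * (A ! i) x y)"
    by (intro sum.cong refl) (simp add: nth_append)
  also have "(\<Sum>i<length B. z (length A + i) * ((A @ B) ! (length A + i)) x y) = (\<Sum>i<length B. z (length A + i) * (B ! i) x y)"
    by (intro sum.cong refl) (simp add: nth_append)
  finally show ?thesis .
qed

lemma lc_Cons:
  fixes z :: "nat \<Rightarrow> real"
  shows "(\<Sum>i<length (a # B). z i * ((a # B) ! i) x y) = z 0 * a x y + (\<Sum>i<length B. z (Suc i) * (B ! i) x y)"
  unfolding length_Cons sum.lessThan_Suc_shift by simp

lemma jacobi_indep_lt:
  assumes "\<And>x. x \<notin> E \<Longrightarrow> (\<Sum>k<K. c k * jacobiP k a b x) = 0" "finite E" "k < K"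
  shows "c k = 0"
proof -
  have pfs: "pf (\<lambda>x. \<Sum>k<K. c k * jacobiP k a b x)" by (intro pf_sum pf_mult pf_const pf_jacobi pf_id)
  have inf: "infinite {x. (\<Sum>k<K. c k * jacobiP k a b x) = 0}"
  proof
    assume "finite {x. (\<Sum>k<K. c k * jacobiP k a b x) = 0}"
    then have "finite ({x. (\<Sum>k<K. c k * jacobiP k a b x) = 0} \<union> E)" using assms(2) by simp
    moreover have "{x. (\<Sum>k<K. c k * jacobiP k a b x) = 0} \<union> E = UNIV" using assms(1) by auto
    ultimately show False using infinite_UNIV_char_0 by metis
  qed
  have all: "(\<Sum>k<K. c k * jacobiP k a b x) = 0" for x by (rule pf_zero[OF pfs inf])
  obtain K' where K': "K = Suc K'" using assms(3) by (cases K) auto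
  show ?thesis
    by (rule jacobi_indep[where c=c and K=K' and a=a and b=b and k=k]) (use all K' assms(3) in \<open>auto simp: lessThan_Suc_atMost\<close>)
qed

lemma CL_pf:
  assumes "c \<in> set (CL p)"
  shows "pf (\<lambda>x. c x y)" "pf (\<lambda>y. c x y)"
proof -
  from assms consider "c = (\<lambda>x y. 1/2)" | m where "c = cB m"
    | m where "c = cC m" | m n where "c = cI m n"
    unfolding CL_def by auto
  then have "pf (\<lambda>x. c x y) \<and> pf (\<lambda>y. c x y)"
  proof cases
    case 1 then show ?thesis by auto
  next
    case (2 m) show ?thesis unfolding 2 cB_def
      by (intro conjI pf_mult pf_divide pf_add pf_diff pf_const pf_id pf_jacobi pf_power)
  next
    case (3 m) show ?thesis unfolding 3 cC_def
      by (intro conjI pf_mult pf_divide pf_add pf_diff pf_const pf_id pf_jacobi pf_power)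
  next
    case (4 m n) show ?thesis unfolding 4 cI_def
      by (intro conjI pf_mult pf_divide pf_add pf_diff pf_const pf_id pf_jacobi pf_power)
  qed
  then show "pf (\<lambda>x. c x y)" "pf (\<lambda>y. c x y)" by auto
qed

lemma CL_ext:
  assumes box: "\<And>x y. -1 < x \<Longrightarrow> x < 0 \<Longrightarrow> -1 < y \<Longrightarrow> y < 0 \<Longrightarrow> (\<Sum>i<length (CL p). z i * (CL p ! i) x y) = 0"
  shows "(\<Sum>i<length (CL p). z i * (CL p ! i) x y) = 0"
proof -
  have px: "pf (\<lambda>x. \<Sum>i<length (CL p). z i * (CL p ! i) x y)" for y
    by (intro pf_sum pf_mult pf_const CL_pf(1)[where p=p] nth_mem) simp
  have py: "pf (\<lambda>y. \<Sum>i<length (CL p). z i * (CL p ! i) x y)" for x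
    by (intro pf_sum pf_mult pf_const CL_pf(2)[where p=p] nth_mem) simp
  have step1: "(\<Sum>i<length (CL p). z i * (CL p ! i) x y) = 0" if "-1 < y" "y < 0" for x y
    by (rule pf_zero_Ioo[OF px, of "-1" 0]) (use box that in auto)
  show ?thesis
    by (rule pf_zero_Ioo[OF py, of "-1" 0]) (use step1 in auto)
qed

lemma nth_image: "(!) xs ` {..<length xs} = set xs"
  by (auto simp: in_set_conv_nth image_def)

lemma CL_indep:
  assumes p: "p \<ge> 2"
    and F0: "\<And>x y. (\<Sum>i<length (CL p). z i * (CL p ! i) x y) = 0"
    and i: "i < length (CL p)"
  shows "z i = 0"
proof -
  define N where "N = p - 2"
  define L where "L = length (PS 4 p)"
  have lenB: "length (map cB [1..<p - 1]) = N" unfolding N_def by simp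
  have lenC: "length (map cC [1..<p - 1]) = N" unfolding N_def by simp
  have nB: "map cB [1..<p - 1] ! j = cB (Suc j)" if "j < N" for j using that unfolding N_def by simp
  have nC: "map cC [1..<p - 1] ! j = cC (Suc j)" if "j < N" for j using that unfolding N_def by simp
  have split: "(\<Sum>i<length (CL p). z i * (CL p ! i) x y) =
      z 0 / 2 + (\<Sum>j<N. z (Suc j) * cB (Suc j) x y) + (\<Sum>j<N. z (Suc (N + j)) * cC (Suc j) x y)
      + (\<Sum>j<L. z (Suc (2 * N + j)) * cI (fst (PS 4 p ! j)) (snd (PS 4 p ! j)) x y)" for x y
  proof -
    have "(\<Sum>i<length (CL p). z i * (CL p ! i) x y) =
      z 0 * (1/2) +
      (\<Sum>i<length (map cB [1..<p - 1] @ map cC [1..<p - 1] @ map (\<lambda>(m, n). cI m n) (PS 4 p)). z (Suc i) *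
         ((map cB [1..<p - 1] @ map cC [1..<p - 1] @ map (\<lambda>(m, n). cI m n) (PS 4 p)) ! i) x y)"
      unfolding CL_def lc_Cons by simp
    also have "(\<Sum>i<length (map cB [1..<p - 1] @ map cC [1..<p - 1] @ map (\<lambda>(m, n). cI m n) (PS 4 p)). z (Suc i) *
         ((map cB [1..<p - 1] @ map cC [1..<p - 1] @ map (\<lambda>(m, n). cI m n) (PS 4 p)) ! i) x y)
      = (\<Sum>j<N. z (Suc j) * cB (Suc j) x y) + ((\<Sum>j<N. z (Suc (N + j)) * cC (Suc j) x y)
      + (\<Sum>j<L. z (Suc (2 * N + j)) * cI (fst (PS 4 p ! j)) (snd (PS 4 p ! j)) x y))"
    proof -
      have s1: "(\<Sum>i<N. z (Suc i) * (map cB [1..<p - 1] ! i) x y) = (\<Sum>j<N. z (Suc j) * cB (Suc j) x y)"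
        by (rule sum.cong[OF refl]) (use nB in force)
      have s2: "(\<Sum>i<N. z (Suc (N + i)) * (map cC [1..<p - 1] ! i) x y) = (\<Sum>j<N. z (Suc (N + j)) * cC (Suc j) x y)"
        by (rule sum.cong[OF refl]) (use nC in force)
      have s3: "(\<Sum>i<length (map (\<lambda>(m, n). cI m n) (PS 4 p)). z (Suc (N + (N + i))) * (map (\<lambda>(m, n). cI m n) (PS 4 p) ! i) x y)
          = (\<Sum>j<L. z (Suc (2 * N + j)) * cI (fst (PS 4 p ! j)) (snd (PS 4 p ! j)) x y)"
        unfolding L_def by (intro sum.cong refl) (auto simp: case_prod_beta' mult_2 add.assoc)
      show ?thesis unfolding lc_append lenB lenC s1 s2 s3 by (rule refl)
    qed
    finally show ?thesis by (simp add: algebra_simps)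
  qed
  let ?SB = "\<lambda>y. \<Sum>j<N. z (Suc j) * jacobiP j 2 2 y"
  let ?SC = "\<lambda>y. \<Sum>j<N. (-1) ^ j * z (Suc (N + j)) * jacobiP j 2 2 y"
  have xm1: "z 0 / 2 + (1 - y) / 4 * ?SC y = 0" for y
  proof -
    have "(\<Sum>j<N. z (Suc j) * cB (Suc j) (-1) y) = 0" by (simp add: cB_def)
    moreover have "(\<Sum>j<L. z (Suc (2 * N + j)) * cI (fst (PS 4 p ! j)) (snd (PS 4 p ! j)) (-1) y) = 0"
      by (simp add: cI_def)
    moreover have "(\<Sum>j<N. z (Suc (N + j)) * cC (Suc j) (-1) y) = (1 - y) / 4 * ?SC y"
      by (simp add: cC_def sum_distrib_left field_simps)
    ultimately show ?thesis using F0[of "-1" y] split[of "-1" y] by simp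
  qed
  have z0: "z 0 = 0" using xm1[of 1] by simp
  have SC0: "?SC y = 0" if "y \<notin> {1}" for y using xm1[of y] z0 that by simp
  have zC: "z (Suc (N + j)) = 0" if "j < N" for j
  proof -
    have "(-1) ^ j * z (Suc (N + j)) = 0"
      by (rule jacobi_indep_lt[where E="{1}" and K=N and c="\<lambda>j. (-1) ^ j * z (Suc (N + j))" and a=2 and b=2 and k=j]) (use SC0 that in \<open>auto simp: mult.assoc\<close>)
    then show ?thesis by simp
  qed
  have x1: "(1 - y) / 4 * ?SB y = 0" for y
  proof -
    have "(\<Sum>j<N. z (Suc (N + j)) * cC (Suc j) 1 y) = 0" by (simp add: cC_def)
    moreover have "(\<Sum>j<L. z (Suc (2 * N + j)) * cI (fst (PS 4 p ! j)) (snd (PS 4 p ! j)) 1 y) = 0"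
      by (simp add: cI_def)
    moreover have "(\<Sum>j<N. z (Suc j) * cB (Suc j) 1 y) = (1 - y) / 4 * ?SB y"
      by (simp add: cB_def sum_distrib_left field_simps)
    ultimately show ?thesis using F0[of 1 y] split[of 1 y] z0 by simp
  qed
  have zB: "z (Suc j) = 0" if "j < N" for j
    by (rule jacobi_indep_lt[where E="{1}" and K=N and c="\<lambda>j. z (Suc j)" and a=2 and b=2 and k=j]) (use x1 that in auto)
  have FI: "(\<Sum>j<L. z (Suc (2 * N + j)) * cI (fst (PS 4 p ! j)) (snd (PS 4 p ! j)) x y) = 0" for x y
    using F0[of x y] split[of x y] z0 zB zC by simp
  define \<delta> where "\<delta> q = z (Suc (2 * N + (THE j. j < L \<and> PS 4 p ! j = q)))" for q
  have dist: "distinct (PS 4 p)" by (rule PS_distinct)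
  have \<delta>nth: "\<delta> (PS 4 p ! j) = z (Suc (2 * N + j))" if "j < L" for j
  proof -
    have "(THE j'. j' < L \<and> PS 4 p ! j' = PS 4 p ! j) = j"
      using that dist unfolding L_def by (auto simp: nth_eq_iff_index_eq)
    then show ?thesis unfolding \<delta>_def by simp
  qed
  define S where "S = set (PS 4 p)"
  have inj: "inj_on ((!) (PS 4 p)) {..<L}" unfolding L_def using dist by (simp add: inj_on_nth)
  have FS: "(\<Sum>q\<in>S. \<delta> q * cI (fst q) (snd q) x y) = 0" for x y
  proof -
    have "(\<Sum>q\<in>S. \<delta> q * cI (fst q) (snd q) x y) = (\<Sum>j<L. \<delta> (PS 4 p ! j) * cI (fst (PS 4 p ! j)) (snd (PS 4 p ! j)) x y)"
      unfolding S_def L_def nth_image[symmetric] by (rule sum.reindex[OF inj[unfolded L_def], unfolded comp_def])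
    also have "\<dots> = 0" using FI[of x y] by (simp add: \<delta>nth)
    finally show ?thesis .
  qed
  have Sset: "S = {(m, n). m \<le> p \<and> n \<le> p \<and> m + n + 4 \<le> p}" unfolding S_def PS_set ..
  define D where "D m y = (\<Sum>n\<le>p. (if m + n + 4 \<le> p then \<delta> (m, n) else 0) * jacobiP n (2 * m + 5) 2 y)" for m y
  have FD: "(\<Sum>q\<in>S. \<delta> q * cI (fst q) (snd q) x y) =
      (1 - x) / 2 * ((1 + x) / 2) / 2 * (\<Sum>m\<le>p. (((1 - y) / 2) ^ (m + 2) * D m y) * jacobiP m 2 2 x)" for x y
  proof -
    have "(\<Sum>q\<in>S. \<delta> q * cI (fst q) (snd q) x y) = (\<Sum>q\<in>{..p} \<times> {..p}. (if fst q + snd q + 4 \<le> p then \<delta> q else 0) * cI (fst q) (snd q) x y)"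
      by (rule sum.mono_neutral_cong_left) (auto simp: Sset)
    also have "\<dots> = (\<Sum>m\<le>p. \<Sum>n\<le>p. (if m + n + 4 \<le> p then \<delta> (m, n) else 0) * cI m n x y)"
      by (subst sum.cartesian_product) (auto intro!: sum.cong)
    also have "\<dots> = (\<Sum>m\<le>p. (1 - x) / 2 * ((1 + x) / 2) / 2 * ((((1 - y) / 2) ^ (m + 2) * D m y) * jacobiP m 2 2 x))"
      by (intro sum.cong refl) (simp add: D_def cI_def sum_distrib_left sum_distrib_right ac_simps)
    also have "\<dots> = (1 - x) / 2 * ((1 + x) / 2) / 2 * (\<Sum>m\<le>p. (((1 - y) / 2) ^ (m + 2) * D m y) * jacobiP m 2 2 x)"
      by (simp add: sum_distrib_left)
    finally show ?thesis .
  qed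
  have coef: "((1 - y) / 2) ^ (m + 2) * D m y = 0" if "m \<le> p" for m y
  proof -
    have "(\<Sum>m<Suc p. (((1 - y) / 2) ^ (m + 2) * D m y) * jacobiP m 2 2 x) = 0" if "x \<notin> {-1, 1}" for x
    proof -
      have "(1 - x) / 2 * ((1 + x) / 2) / 2 \<noteq> 0" using that by auto
      then show ?thesis using FS[of x y] FD[of x y] by (simp add: lessThan_Suc_atMost)
    qed
    then show ?thesis
      by (rule jacobi_indep_lt[where E="{-1, 1}" and K="Suc p" and c="\<lambda>m. ((1 - y) / 2) ^ (m + 2) * D m y" and a=2 and b=2 and k=m])
         (use that in auto)
  qed
  have Dz: "D m y = 0" if "m \<le> p" "y \<notin> {1}" for m y
    using coef[OF that(1), of y] that(2) by simp
  have \<delta>0: "\<delta> (m, n) = 0" if "(m, n) \<in> S" for m n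
  proof -
    have mn: "m \<le> p" "n \<le> p" "m + n + 4 \<le> p" using that Sset by auto
    have "(if m + n + 4 \<le> p then \<delta> (m, n) else 0) = 0"
      by (rule jacobi_indep_lt[where E="{1}" and K="Suc p" and c="\<lambda>n. if m + n + 4 \<le> p then \<delta> (m, n) else 0" and a="2 * m + 5" and b=2 and k=n])
         (use Dz[OF mn(1)] mn in \<open>auto simp: D_def lessThan_Suc_atMost\<close>)
    then show ?thesis using mn by simp
  qed
  have lenCL: "length (CL p) = Suc (2 * N + L)" unfolding CL_def N_def L_def by simp
  consider "i = 0" | j where "i = Suc j" "j < N" | j where "i = Suc (N + j)" "j < N"
    | j where "i = Suc (2 * N + j)" "j < L"
    using i lenCL by (metis add_less_imp_less_left less_Suc_eq_0_disj mult_2 not_less_iff_gr_or_eq le_add_diff_inverse less_diff_conv not_le)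
  then show ?thesis
  proof cases
    case 1 then show ?thesis using z0 by simp
  next
    case (2 j) then show ?thesis using zB by simp
  next
    case (3 j) then show ?thesis using zC by simp
  next
    case (4 j)
    have "PS 4 p ! j \<in> S" unfolding S_def L_def using 4 by (simp add: L_def)
    then have "\<delta> (PS 4 p ! j) = 0" using \<delta>0 by (metis prod.collapse)
    then show ?thesis using \<delta>nth[OF 4(2)] 4 by simp
  qed
qed


definition cts :: "(real \<Rightarrow> real \<Rightarrow> real) \<Rightarrow> bool" where
  "cts H \<longleftrightarrow> continuous_on UNIV (\<lambda>z::real \<times> real. H (fst z) (snd z))"

lemma cont_jacobi [continuous_intros]:
  "continuous_on S f \<Longrightarrow> continuous_on S (\<lambda>z. jacobiP n a b (f z))"
  unfolding jacobiP_def by (intro continuous_intros; auto)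

lemma cts_CL: "c \<in> set (CL p) \<Longrightarrow> cts c"
proof -
  assume "c \<in> set (CL p)"
  then consider "c = (\<lambda>x y. 1/2)" | m where "c = cB m"
    | m where "c = cC m" | m n where "c = cI m n"
    unfolding CL_def by auto
  then show ?thesis
  proof cases
    case 1 show ?thesis unfolding 1 cts_def by (intro continuous_intros; auto)
  next
    case (2 m) show ?thesis unfolding 2 cts_def cB_def by (intro continuous_intros; auto)
  next
    case (3 m) show ?thesis unfolding 3 cts_def cC_def by (intro continuous_intros; auto)
  next
    case (4 m n) show ?thesis unfolding 4 cts_def cI_def by (intro continuous_intros; auto)
  qed
qed

lemma cts_SL: "g \<in> set (SL p) \<Longrightarrow> cts g"
proof -
  assume "g \<in> set (SL p)"
  then consider m where "g = EAc m" | m n where "g = Ic m n"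
    unfolding SL_def by auto
  then show ?thesis
  proof cases
    case (1 m) show ?thesis unfolding 1 cts_def EAc_def by (intro continuous_intros; auto)
  next
    case (2 m n) show ?thesis unfolding 2 cts_def Ic_def by (intro continuous_intros; auto)
  qed
qed

lemma T_xi:
  assumes "(r, s) \<in> Omega_ref"
  shows "-1 \<le> xi r s \<and> xi r s \<le> 1 \<and> -1 \<le> s \<and> s \<le> 1"
proof (cases "s = 1")
  case True
  then have "r = -1" using assms by (auto simp: Omega_ref_def)
  then show ?thesis using True by (simp add: xi_def)
next
  case False
  have s: "-1 \<le> s" "s < 1" "0 \<le> 1 + r" "1 + r \<le> 1 - s" using assms False by (auto simp: Omega_ref_def)
  then have "0 \<le> (1 + r) / (1 - s)" "(1 + r) / (1 - s) \<le> 1" by (auto simp: divide_le_eq_1)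
  then have "0 \<le> 2 * ((1 + r) / (1 - s))" by linarith
  moreover from \<open>(1 + r) / (1 - s) \<le> 1\<close> have "2 * ((1 + r) / (1 - s)) \<le> 2" by linarith
  moreover have "xi r s = -1 + 2 * ((1 + r) / (1 - s))" by (simp add: xi_def)
  ultimately show ?thesis using s by linarith
qed

lemma T_compact: "compact Omega_ref"
unfolding compact_eq_bounded_closed
proof
  have "Omega_ref \<subseteq> cbox (-1, -1) (1, 1)"
    by (auto simp: Omega_ref_def cbox_Pair_eq)
  then show "bounded Omega_ref" using bounded_cbox bounded_subset by blast
  have eq: "Omega_ref = {z. -1 \<le> fst z} \<inter> {z. -1 \<le> snd z} \<inter> {z. fst z + snd z \<le> (0::real)}"
    by (auto simp: Omega_ref_def)
  show "closed Omega_ref"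
    unfolding eq by (intro closed_Int closed_Collect_le continuous_intros)
qed

lemma T_lmeas: "Omega_ref \<in> lmeasurable"
  by (rule lmeasurable_compact[OF T_compact])

lemma borel_to_lebesgue_on:
  "f \<in> borel_measurable borel \<Longrightarrow> f \<in> borel_measurable (lebesgue_on S)"
  by (intro measurable_restrict_space1 measurable_completion) simp

lemma xi_meas: "(\<lambda>z::real \<times> real. xi (fst z) (snd z)) \<in> borel_measurable borel"
proof -
  have [measurable]: "(fst::real \<times> real \<Rightarrow> real) \<in> borel_measurable borel"
    by (intro borel_measurable_continuous_onI continuous_intros)
  have [measurable]: "(snd::real \<times> real \<Rightarrow> real) \<in> borel_measurable borel"
    by (intro borel_measurable_continuous_onI continuous_intros)
  show ?thesis unfolding xi_def by measurable
qed

lemma int_lift: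
  assumes H: "cts H" and S: "S \<subseteq> Omega_ref" "S \<in> lmeasurable"
  shows "(\<lambda>z. H (xi (fst z) (snd z)) (snd z)) integrable_on S"
proof -
  have meas: "(\<lambda>z. H (xi (fst z) (snd z)) (snd z)) \<in> borel_measurable borel"
  proof (rule borel_measurable_continuous_Pair[where H=H])
    show "(\<lambda>z::real \<times> real. xi (fst z) (snd z)) \<in> borel_measurable borel" by (rule xi_meas)
    show "(snd::real \<times> real \<Rightarrow> real) \<in> borel_measurable borel"
      by (intro borel_measurable_continuous_onI continuous_intros)
    show "continuous_on UNIV (\<lambda>x. H (fst x) (snd x))" using H unfolding cts_def .
  qed
  have "compact ((\<lambda>z::real \<times> real. H (fst z) (snd z)) ` cbox (-1, -1) (1, 1))"
    by (rule compact_continuous_image) (use H in \<open>auto simp: cts_def intro: continuous_on_subset\<close>)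
  then have "bounded ((\<lambda>z::real \<times> real. H (fst z) (snd z)) ` cbox (-1, -1) (1, 1))"
    by (rule compact_imp_bounded)
  then obtain M where M0: "\<forall>v \<in> (\<lambda>z::real \<times> real. H (fst z) (snd z)) ` cbox (-1, -1) (1, 1). norm v \<le> M"
    unfolding bounded_iff by blast
  have M: "\<bar>H (fst w) (snd w)\<bar> \<le> M" if "w \<in> cbox (-1, -1) (1, 1)" for w
    using M0 that by auto
  show ?thesis
  proof (rule measurable_bounded_by_integrable_imp_integrable_real)
    show "(\<lambda>z. H (xi (fst z) (snd z)) (snd z)) \<in> borel_measurable (lebesgue_on S)"
      by (rule borel_to_lebesgue_on[OF meas])
    show "(\<lambda>_. M) integrable_on S" by (rule integrable_on_const[OF S(2)])
    show "S \<in> sets lebesgue" using S(2) by (simp add: fmeasurableD)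
    fix z assume "z \<in> S"
    then have "(fst z, snd z) \<in> Omega_ref" using S(1) by auto
    then have "(xi (fst z) (snd z), snd z) \<in> cbox (-1, -1) (1, 1)"
      using T_xi[of "fst z" "snd z"] by (auto simp: cbox_Pair_eq)
    then show "\<bar>H (xi (fst z) (snd z)) (snd z)\<bar> \<le> M" using M[of "(xi (fst z) (snd z), snd z)"] by simp
  qed
qed

definition Bx :: "(real \<times> real) set" where "Bx = cbox (-1, -1) (0, 0)"

lemma Bx_sub: "Bx \<subseteq> Omega_ref"
  by (auto simp: Bx_def Omega_ref_def cbox_Pair_eq)

lemma pos_zero:
  assumes H: "cts H"
    and nonneg: "\<And>x y. -1 \<le> x \<Longrightarrow> x \<le> 1 \<Longrightarrow> -1 \<le> y \<Longrightarrow> y \<le> 1 \<Longrightarrow> 0 \<le> H x y"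
    and I0: "integral Omega_ref (\<lambda>z. H (xi (fst z) (snd z)) (snd z)) = 0"
    and xy: "-1 < x" "x < 0" "-1 < y" "y < 0"
  shows "H x y = 0"
proof -
  define f where "f z = H (xi (fst z) (snd z)) (snd z)" for z
  have fT: "0 \<le> f z" if "z \<in> Omega_ref" for z
    using T_xi[of "fst z" "snd z"] that nonneg unfolding f_def by auto
  have iT: "f integrable_on Omega_ref" unfolding f_def by (rule int_lift[OF H order_refl T_lmeas])
  have iB: "f integrable_on Bx" unfolding f_def by (rule int_lift[OF H Bx_sub]) (simp add: Bx_def)
  have "integral Bx f \<le> integral Omega_ref f"
    by (rule integral_subset_le[OF Bx_sub iB iT]) (use fT in auto)
  moreover have "0 \<le> integral Bx f" by (rule integral_nonneg[OF iB]) (use fT Bx_sub in auto)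
  ultimately have "integral Bx f = 0" using I0 unfolding f_def by linarith
  then have hi: "(f has_integral 0) (cbox (-1, -1) (0, 0))" using iB unfolding Bx_def
    using has_integral_integrable_integral by blast
  have cont: "continuous_on (cbox (-1, -1) (0, 0)) f"
  proof -
    have c1: "continuous_on (cbox (-1::real, -1::real) (0, 0)) (\<lambda>z. (xi (fst z) (snd z), snd z))"
      unfolding xi_def by (intro continuous_intros) (auto simp: cbox_Pair_eq)
    show ?thesis unfolding f_def
      using continuous_on_compose2[OF H[unfolded cts_def] c1] by simp
  qed
  define r where "r = -1 + (1 + x) * (1 - y) / 2"
  have rr: "-1 < r" "r < 0"
  proof -
    have "0 < (1 + x) * (1 - y)" using xy by simp
    moreover have "(1 + x) * (1 - y) < 1 * 2"
      using xy by (intro mult_strict_mono) auto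
    ultimately show "-1 < r" "r < 0" unfolding r_def by auto
  qed
  have zin: "(r, y) \<in> cbox (-1, -1) (0, 0)" using rr xy by (auto simp: cbox_Pair_eq)
  have "f (r, y) = 0"
  proof (rule has_integral_0_cbox_imp_0[OF cont _ hi _ zin])
    show "\<And>z. z \<in> box (-1, -1) (0, 0) \<Longrightarrow> 0 \<le> f z"
      using fT Bx_sub box_subset_cbox unfolding Bx_def by blast
    show "box (-1::real, -1::real) (0, 0) \<noteq> {}" by (auto simp: box_ne_empty Basis_prod_def)
  qed
  moreover have "xi r y = x" using xy unfolding xi_def r_def by (simp add: field_simps)
  ultimately show ?thesis unfolding f_def by simp
qed


definition IT :: "(real \<Rightarrow> real \<Rightarrow> real) \<Rightarrow> real" where
  "IT H = integral Omega_ref (\<lambda>z. H (xi (fst z) (snd z)) (snd z))"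

lemma cts_const: "cts (\<lambda>x y. c)" unfolding cts_def by (intro continuous_intros)
lemma cts_add: "cts f \<Longrightarrow> cts g \<Longrightarrow> cts (\<lambda>x y. f x y + g x y)"
  unfolding cts_def by (intro continuous_intros)
lemma cts_mult: "cts f \<Longrightarrow> cts g \<Longrightarrow> cts (\<lambda>x y. f x y * g x y)"
  unfolding cts_def by (intro continuous_intros)
lemma cts_sum: "(\<And>j. j \<in> J \<Longrightarrow> cts (H j)) \<Longrightarrow> cts (\<lambda>x y. \<Sum>j\<in>J. H j x y)"
  unfolding cts_def by (intro continuous_intros) auto
lemma cts_y: "cts (\<lambda>x y. y)" unfolding cts_def by (intro continuous_intros)
lemma cts_x: "cts (\<lambda>x y. x)" unfolding cts_def by (intro continuous_intros)
lemma cts_pt: "cts c \<Longrightarrow> cts (pt c)"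
  unfolding cts_def pt_def by (intro continuous_intros; auto)

lemma IT_sum:
  assumes "finite J" "\<And>j. j \<in> J \<Longrightarrow> cts (H j)"
  shows "IT (\<lambda>x y. \<Sum>j\<in>J. a j * H j x y) = (\<Sum>j\<in>J. a j * IT (H j))"
proof -
  have int: "(\<lambda>z. a j * H j (xi (fst z) (snd z)) (snd z)) integrable_on Omega_ref" if "j \<in> J" for j
    using int_lift[OF cts_mult[OF cts_const assms(2)[OF that]] order_refl T_lmeas] by simp
  have "IT (\<lambda>x y. \<Sum>j\<in>J. a j * H j x y) = (\<Sum>j\<in>J. integral Omega_ref (\<lambda>z. a j * H j (xi (fst z) (snd z)) (snd z)))"
    unfolding IT_def by (rule integral_sum[OF assms(1) int])
  also have "\<dots> = (\<Sum>j\<in>J. a j * IT (H j))"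
    unfolding IT_def by (simp only: Henstock_Kurzweil_Integration.integral_mult_right)
  finally show ?thesis .
qed

lemma IT_cong: "(\<And>r s. H1 (xi r s) s = H2 (xi r s) s) \<Longrightarrow> IT H1 = IT H2"
  unfolding IT_def by simp

theorem main:
  fixes p :: nat
  assumes p: "p \<ge> 2"
  shows "length (Phi_mu0 p) = p * (p - 1) div 2
       \<and> length (Phi_star p) = p * (p - 1) div 2
       \<and> Determinant.det (gram p) \<noteq> 0
       \<and> (\<forall>x \<in> carrier_vec (p * (p - 1) div 2).
            gram p *\<^sub>v x = 0\<^sub>v (p * (p - 1) div 2) \<longrightarrow> x = 0\<^sub>v (p * (p - 1) div 2))"
proof -
  define N where "N = p * (p - 1) div 2"
  have lenmu: "length (Phi_mu0 p) = N" unfolding N_def Phi_mu0_eq using length_CL[OF p] by simp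
  have lenst: "length (Phi_star p) = N" unfolding N_def Phi_star_eq using length_SL[OF p] by simp
  have lenCL: "length (CL p) = N" unfolding N_def using length_CL[OF p] .
  have lenSL: "length (SL p) = N" unfolding N_def using length_SL[OF p] .
  let ?c = "\<lambda>i. CL p ! i"
  let ?g = "\<lambda>j. SL p ! j"
  have ctsc: "cts (?c i)" if "i < N" for i using cts_CL[OF nth_mem] that lenCL by simp
  have ctsg: "cts (?g j)" if "j < N" for j using cts_SL[OF nth_mem] that lenSL by simp
  define G where "G = gram p"
  have Gc: "G \<in> carrier_mat N N" unfolding G_def gram_def using lenmu lenst by simp
  have Gij: "G $$ (i, j) = IT (\<lambda>x y. (1 + y) * ?c i x y * ?g j x y)" if "i < N" "j < N" for i j
  proof -
    have "G $$ (i, j) = integral Omega_ref (\<lambda>(r, s). (Phi_mu0 p ! i) r s * (Phi_star p ! j) r s)"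
      unfolding G_def gram_def using that lenmu lenst by simp
    also have "(\<lambda>(r, s). (Phi_mu0 p ! i) r s * (Phi_star p ! j) r s)
        = (\<lambda>z. (1 + snd z) * ?c i (xi (fst z) (snd z)) (snd z) * ?g j (xi (fst z) (snd z)) (snd z))"
      using that lenCL lenSL by (auto simp: Phi_mu0_eq Phi_star_eq chi_def lift_def)
    finally show ?thesis unfolding IT_def by simp
  qed
  have "\<forall>k. \<exists>z. k < N \<longrightarrow> (\<forall>r s. lift (pt (?c k)) r s = (\<Sum>j<N. z j * (Phi_star p ! j) r s))"
    using pt_lift_comb[OF p nth_mem] lenCL lenst by metis
  then obtain D where D: "\<And>k r s. k < N \<Longrightarrow> lift (pt (?c k)) r s = (\<Sum>j<N. D k j * (Phi_star p ! j) r s)"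
    by metis
  have D': "pt (?c k) (xi r s) s = (\<Sum>j<N. D k j * ?g j (xi r s) s)" if "k < N" for k r s
    using D[OF that, of r s] lenSL by (simp add: lift_def Phi_star_eq)
  define Dm where "Dm = mat N N (\<lambda>(k, j). D k j)"
  have Dc: "transpose_mat Dm \<in> carrier_mat N N" unfolding Dm_def by simp
  define Km where "Km = G * transpose_mat Dm"
  have Kc: "Km \<in> carrier_mat N N" unfolding Km_def using Gc Dc by simp
  have Kik: "Km $$ (i, k) = IT (\<lambda>x y. (1 + y) * ?c i x y * pt (?c k) x y)" if "i < N" "k < N" for i k
  proof -
    have "Km $$ (i, k) = (\<Sum>j\<in>{0..<N}. G $$ (i, j) * D k j)"
      unfolding Km_def using that Gc by (simp add: Dm_def scalar_prod_def)
    also have "\<dots> = (\<Sum>j\<in>{0..<N}. D k j * IT (\<lambda>x y. (1 + y) * ?c i x y * ?g j x y))"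
      by (intro sum.cong refl) (simp add: Gij that)
    also have "\<dots> = IT (\<lambda>x y. \<Sum>j\<in>{0..<N}. D k j * ((1 + y) * ?c i x y * ?g j x y))"
      by (rule IT_sum[symmetric]) (auto intro!: cts_mult cts_add cts_const cts_y ctsc ctsg that)
    also have "\<dots> = IT (\<lambda>x y. (1 + y) * ?c i x y * pt (?c k) x y)"
    proof (rule IT_cong)
      fix r s
      show "(\<Sum>j\<in>{0..<N}. D k j * ((1 + s) * ?c i (xi r s) s * ?g j (xi r s) s)) = (1 + s) * ?c i (xi r s) s * pt (?c k) (xi r s) s"
        unfolding D'[OF that(2)] by (simp add: sum_distrib_left atLeast0LessThan ac_simps)
    qed
    finally show ?thesis .
  qed
  have detK: "det Km \<noteq> 0"
  proof
    assume "det Km = 0"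
    then obtain v where v: "v \<in> carrier_vec N" "v \<noteq> 0\<^sub>v N" "Km *\<^sub>v v = 0\<^sub>v N"
      using det_0_iff_vec_prod_zero[OF Kc] by blast
    define F where "F x y = (\<Sum>k<N. v $ k * ?c k x y)" for x y
    have Kv: "(\<Sum>k\<in>{0..<N}. v $ k * IT (\<lambda>x y. (1 + y) * ?c i x y * pt (?c k) x y)) = 0" if "i < N" for i
    proof -
      have "(Km *\<^sub>v v) $ i = 0" using v(3) that by simp
      then have "(\<Sum>k\<in>{0..<N}. Km $$ (i, k) * v $ k) = 0" using Kc v(1) that by (simp add: scalar_prod_def)
      then show ?thesis using Kik[OF that] by (simp add: ac_simps)
    qed
    have ctsK: "cts (\<lambda>x y. (1 + y) * ?c i x y * pt (?c k) x y)" if "i < N" "k < N" for i k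
      by (intro cts_mult cts_add cts_const cts_y ctsc cts_pt that)
    have Kv2: "IT (\<lambda>x y. \<Sum>k\<in>{0..<N}. v $ k * ((1 + y) * ?c i x y * pt (?c k) x y)) = 0" if "i < N" for i
      using Kv[OF that] by (subst IT_sum) (auto intro: ctsK that)
    have "IT (\<lambda>x y. \<Sum>i\<in>{0..<N}. v $ i * (\<Sum>k\<in>{0..<N}. v $ k * ((1 + y) * ?c i x y * pt (?c k) x y))) = 0"
      by (subst IT_sum) (auto intro!: cts_sum cts_mult cts_const ctsK simp: Kv2)
    moreover have "IT (\<lambda>x y. \<Sum>i\<in>{0..<N}. v $ i * (\<Sum>k\<in>{0..<N}. v $ k * ((1 + y) * ?c i x y * pt (?c k) x y)))
       = IT (\<lambda>x y. (-1) * ((1 + y) * 4 * ((1 + x) / 2) * ((1 - x) / 2) * ((1 - y) / 2) ^ 2 * (F x y) ^ 2))"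
    proof (rule IT_cong)
      fix r s
      let ?x = "xi r s"
      have "(\<Sum>i\<in>{0..<N}. v $ i * (\<Sum>k\<in>{0..<N}. v $ k * ((1 + s) * ?c i ?x s * pt (?c k) ?x s)))
        = (\<Sum>i\<in>{0..<N}. \<Sum>k\<in>{0..<N}. (-1) * ((1 + s) * 4 * ((1 + ?x) / 2) * ((1 - ?x) / 2) * ((1 - s) / 2) ^ 2) * ((v $ i * ?c i ?x s) * (v $ k * ?c k ?x s)))"
        unfolding sum_distrib_left pt_def by (intro sum.cong refl) (simp add: field_simps power2_eq_square)
      also have "\<dots> = (-1) * ((1 + s) * 4 * ((1 + ?x) / 2) * ((1 - ?x) / 2) * ((1 - s) / 2) ^ 2) * (\<Sum>i\<in>{0..<N}. \<Sum>k\<in>{0..<N}. (v $ i * ?c i ?x s) * (v $ k * ?c k ?x s))"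
        unfolding sum_distrib_left by (rule refl)
      also have "\<dots> = (-1) * ((1 + s) * 4 * ((1 + ?x) / 2) * ((1 - ?x) / 2) * ((1 - s) / 2) ^ 2) * ((\<Sum>i\<in>{0..<N}. v $ i * ?c i ?x s) * (\<Sum>k\<in>{0..<N}. v $ k * ?c k ?x s))"
        by (simp only: sum_product)
      also have "\<dots> = (-1) * ((1 + s) * 4 * ((1 + ?x) / 2) * ((1 - ?x) / 2) * ((1 - s) / 2) ^ 2 * (F ?x s) ^ 2)"
        by (simp add: F_def atLeast0LessThan power2_eq_square)
      finally show "(\<Sum>i\<in>{0..<N}. v $ i * (\<Sum>k\<in>{0..<N}. v $ k * ((1 + s) * ?c i ?x s * pt (?c k) ?x s)))
         = (-1) * ((1 + s) * 4 * ((1 + ?x) / 2) * ((1 - ?x) / 2) * ((1 - s) / 2) ^ 2 * (F ?x s) ^ 2)" .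
    qed
    moreover define Hq where "Hq x y = (1 + y) * 4 * ((1 + x) / 2) * ((1 - x) / 2) * ((1 - y) / 2) ^ 2 * (F x y) ^ 2" for x y
    have ctsF: "cts F" unfolding F_def[abs_def] by (intro cts_sum cts_mult cts_const ctsc) simp
    have ctsHq: "cts Hq" unfolding Hq_def[abs_def] cts_def using ctsF unfolding cts_def
      by (intro continuous_intros; auto)
    ultimately have "IT (\<lambda>x y. (-1) * Hq x y) = 0" unfolding Hq_def by simp
    then have "(-1) * IT Hq = 0" using IT_sum[of "{0::nat}" "\<lambda>_. Hq" "\<lambda>_. -1"] ctsHq by simp
    then have IHq: "IT Hq = 0" by simp
    have Fbox: "F x y = 0" if "-1 < x" "x < 0" "-1 < y" "y < 0" for x y
    proof -
      have "Hq x y = 0"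
      proof (rule pos_zero[OF ctsHq _ IHq[unfolded IT_def] that])
        fix x y :: real assume "-1 \<le> x" "x \<le> 1" "-1 \<le> y" "y \<le> 1"
        then show "0 \<le> Hq x y" unfolding Hq_def by (intro mult_nonneg_nonneg) auto
      qed
      then show ?thesis using that unfolding Hq_def by simp
    qed
    have Fall: "F x y = 0" for x y
    proof -
      have "(\<Sum>i<length (CL p). v $ i * (CL p ! i) x y) = 0"
        by (rule CL_ext[where z="\<lambda>k. v $ k"]) (use Fbox lenCL in \<open>simp add: F_def\<close>)
      then show ?thesis using lenCL by (simp add: F_def)
    qed
    have "v $ k = 0" if "k < N" for k
      by (rule CL_indep[where z="\<lambda>k. v $ k", OF p _ that[folded lenCL]]) (use Fall lenCL in \<open>simp add: F_def\<close>)
    then have "v = 0\<^sub>v N" using v(1) by (intro eq_vecI) auto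
    then show False using v(2) by simp
  qed
  have "det Km = det G * det (transpose_mat Dm)" unfolding Km_def by (rule det_mult[OF Gc Dc])
  then have detG: "det G \<noteq> 0" using detK by auto
  have kern: "\<forall>x \<in> carrier_vec N. G *\<^sub>v x = 0\<^sub>v N \<longrightarrow> x = 0\<^sub>v N"
    using det_0_iff_vec_prod_zero[OF Gc] detG by blast
  show ?thesis using lenmu lenst detG kern unfolding N_def G_def by simp
qed


theorem theorem3p1:
  fixes p :: nat
  assumes "p \<ge> 2"
  shows "length (Phi_mu0 p) = p * (p - 1) div 2
       \<and> length (Phi_star p) = p * (p - 1) div 2
       \<and> Determinant.det (gram p) \<noteq> 0
       \<and> (\<forall>x \<in> carrier_vec (p * (p - 1) div 2).
            gram p *\<^sub>v x = 0\<^sub>v (p * (p - 1) div 2) \<longrightarrow> x = 0\<^sub>v (p * (p - 1) div 2))"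
  by (rule main[OF assms])

end
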